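(* Let $I=(t_0,t_1)\subset\mathbb{R}$ (possibly unbounded), let $f:I\to\mathbb{R}$ be continuous, and let $b<d$ be real numbers with $\limsup_{t\to t_0^+}f(t)<b<d<\liminf_{t\to t_1^-}f(t)$. Then the number of bars of the zero-dimensional persistence diagram $\mathbf{PH}_0(f)$ straddling $[b,d]$, counted with multiplicity and including the essential bar, is finite and equals the number of windings of $f$ around $[b,d]$ plus one.
   Context: For a continuous $f$ on an interval $I$, $\mathbf{PH}_0(f)$ is the zero-dimensional persistent homology of the sublevel-set filtration $X_s=\{t\in I: f(t)\le s\}$, with field coefficients. It decomposes into bars $[b',d']$, recorded as points $(b',d')$ with $b'<d'$. Each bar is born at a local minimum value $b'$ and dies at the level $d'$ where its component merges with a component having a lower minimum (elder rule). The essential bar is $(\inf f,\sup f)$. A bar $[b',d']$ straddles $[b,d]$ if $b'\le b<d\le d'$. Windings: set $t_0^b=t_0$ and, for $k\ge1$, $t_k^d=\min\{t\in I: t>t_{k-1}^b, f(t)=d\}$ and $t_k^b=\min\{t\in I: t>t_k^d, f(t)=b\}$. A minimum over an empty set is defined to be $t_1$. A winding of $f$ around $[b,d]$ is an index $k\ge1$ with $t_k^b\in I$, i.e. a pair $(t_k^d,t_k^b)$ of a passage from level $d$ down to level $b$. *)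

theory Defs
  imports "HOL-Analysis.Analysis"
begin

definition Ioo_ereal :: "ereal \<Rightarrow> ereal \<Rightarrow> real set" where
  "Ioo_ereal t0 t1 = {t. t0 < ereal t \<and> ereal t < t1}"

definition left_end_filter :: "ereal \<Rightarrow> real filter" where
  "left_end_filter t0 = (if t0 = -\<infinity> then at_bot else at_right (real_of_ereal t0))"

definition right_end_filter :: "ereal \<Rightarrow> real filter" where
  "right_end_filter t1 = (if t1 = \<infinity> then at_top else at_left (real_of_ereal t1))"

definition sublevel :: "(real \<Rightarrow> real) \<Rightarrow> ereal \<Rightarrow> ereal \<Rightarrow> real \<Rightarrow> real set" where
  "sublevel f t0 t1 s = {t \<in> Ioo_ereal t0 t1. f t \<le> s}"

definition comps :: "(real \<Rightarrow> real) \<Rightarrow> ereal \<Rightarrow> ereal \<Rightarrow> real \<Rightarrow> real set set" where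
  "comps f t0 t1 s = {connected_component_set (sublevel f t0 t1 s) x | x. x \<in> sublevel f t0 t1 s}"

text \<open>H_0(X_s; k): the free k-vector space on the components of X_s, as finitely
  supported functions on the set of components.\<close>
definition PHvec :: "(real \<Rightarrow> real) \<Rightarrow> ereal \<Rightarrow> ereal \<Rightarrow> real \<Rightarrow> (real set \<Rightarrow> 'k::field) set" where
  "PHvec f t0 t1 s = {w. finite {C. w C \<noteq> 0} \<and> {C. w C \<noteq> 0} \<subseteq> comps f t0 t1 s}"

text \<open>Structure map H_0(X_s) \<rightarrow> H_0(X_t) (s \<le> t) induced by inclusion: a component
  C of X_s is sent to the component of X_t containing it.\<close>
definition PHmap :: "(real \<Rightarrow> real) \<Rightarrow> ereal \<Rightarrow> ereal \<Rightarrow> real \<Rightarrow> real \<Rightarrow>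
    (real set \<Rightarrow> 'k::field) \<Rightarrow> (real set \<Rightarrow> 'k)" where
  "PHmap f t0 t1 s t w = (\<lambda>C'. if C' \<in> comps f t0 t1 t
       then (\<Sum>C \<in> {C. w C \<noteq> 0 \<and> C \<subseteq> C'}. w C) else 0)"

text \<open>A barcode (interval decomposition) of PH_0(f): a family of intervals J a, indexed
  by a \<in> 'i (with multiplicity), together with vectors v a s such that
  e_a(s) \<mapsto> v a s is an isomorphism of persistence modules from the direct sum of the
  interval modules k_{J a} onto PH_0(f): for every s the v a s with s \<in> J a form a
  basis of H_0(X_s), and the structure maps send v a s to v a t if t \<in> J a and to 0
  otherwise.\<close>
definition PH0_barcode :: "(real \<Rightarrow> real) \<Rightarrow> ereal \<Rightarrow> ereal \<Rightarrow> ('i \<Rightarrow> real set)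
    \<Rightarrow> ('i \<Rightarrow> real \<Rightarrow> real set \<Rightarrow> 'k::field) \<Rightarrow> bool" where
  "PH0_barcode f t0 t1 J v \<longleftrightarrow>
     (\<forall>a. J a \<noteq> {} \<and> is_interval (J a)) \<and>
     (\<forall>a s. s \<in> J a \<longrightarrow> v a s \<in> PHvec f t0 t1 s) \<and>
     (\<forall>a s t. s \<le> t \<and> s \<in> J a \<longrightarrow>
        PHmap f t0 t1 s t (v a s) = (if t \<in> J a then v a t else (\<lambda>_. 0))) \<and>
     (\<forall>s. \<forall>w \<in> PHvec f t0 t1 s. \<exists>!(g::'i \<Rightarrow> 'k).
        (\<forall>a. g a \<noteq> 0 \<longrightarrow> s \<in> J a) \<and> finite {a. g a \<noteq> 0} \<and>
        w = (\<lambda>C. \<Sum>a\<in>{a. g a \<noteq> 0}. g a * v a s C))"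

definition bar_birth :: "real set \<Rightarrow> ereal" where
  "bar_birth J = Inf (ereal ` J)"

definition bar_death :: "real set \<Rightarrow> ereal" where
  "bar_death J = Sup (ereal ` J)"

definition straddles :: "real set \<Rightarrow> real \<Rightarrow> real \<Rightarrow> bool" where
  "straddles J b d \<longleftrightarrow> bar_birth J \<le> ereal b \<and> ereal b < ereal d \<and> ereal d \<le> bar_death J"

definition first_hit :: "(real \<Rightarrow> real) \<Rightarrow> ereal \<Rightarrow> ereal \<Rightarrow> real \<Rightarrow> ereal \<Rightarrow> ereal" where
  "first_hit f t0 t1 c \<tau> =
     (let S = {t \<in> Ioo_ereal t0 t1. \<tau> < ereal t \<and> f t = c}
      in if S = {} then t1 else Inf (ereal ` S))"

text \<open>t_k^b (and t_k^d = first_hit f t0 t1 d (t_{k-1}^b)).\<close>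
fun wind_b :: "(real \<Rightarrow> real) \<Rightarrow> ereal \<Rightarrow> ereal \<Rightarrow> real \<Rightarrow> real \<Rightarrow> nat \<Rightarrow> ereal" where
  "wind_b f t0 t1 b d 0 = t0"
| "wind_b f t0 t1 b d (Suc k) = first_hit f t0 t1 b (first_hit f t0 t1 d (wind_b f t0 t1 b d k))"

definition windings :: "(real \<Rightarrow> real) \<Rightarrow> ereal \<Rightarrow> ereal \<Rightarrow> real \<Rightarrow> real \<Rightarrow> nat set" where
  "windings f t0 t1 b d = {k. 1 \<le> k \<and> t0 < wind_b f t0 t1 b d k \<and> wind_b f t0 t1 b d k < t1}"

end

theory Submission
  imports Defs "HOL-Library.Function_Algebras"
begin

lemma sum_fun_apply: "(\<Sum>a\<in>A. (g a :: 'x \<Rightarrow> 'y::comm_monoid_add)) x = (\<Sum>a\<in>A. g a x)"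
  by (induction A rule: infinite_finite_induct) auto

definition fscale :: "'k::field \<Rightarrow> ('x \<Rightarrow> 'k) \<Rightarrow> ('x \<Rightarrow> 'k)" where
  "fscale c w = (\<lambda>x. c * w x)"

interpretation FV: vector_space "fscale :: 'k::field \<Rightarrow> ('x \<Rightarrow> 'k) \<Rightarrow> _"
  by unfold_locales (auto simp: fscale_def algebra_simps)

definition ind :: "real set \<Rightarrow> real set \<Rightarrow> 'k::field" where
  "ind C = (\<lambda>C'. if C' = C then 1 else 0)"

definition Kset where
  "Kset f t0 t1 s t = {C \<in> comps f t0 t1 t. \<exists>x\<in>C. f x \<le> s}"

definition Aset :: "('i \<Rightarrow> real set) \<Rightarrow> real \<Rightarrow> real \<Rightarrow> 'i set" where
  "Aset J s t = {a. s \<in> J a \<and> t \<in> J a}"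

lemma sublevel_mono: "s \<le> t \<Longrightarrow> sublevel f t0 t1 s \<subseteq> sublevel f t0 t1 t"
  unfolding sublevel_def by auto

lemma comps_sub: "C \<in> comps f t0 t1 s \<Longrightarrow> C \<subseteq> sublevel f t0 t1 s \<and> C \<noteq> {}"
proof -
  assume "C \<in> comps f t0 t1 s"
  then obtain x where x: "x \<in> sublevel f t0 t1 s" "C = connected_component_set (sublevel f t0 t1 s) x"
    unfolding comps_def by auto
  have "x \<in> C" using x by simp
  thus ?thesis using connected_component_subset[of "sublevel f t0 t1 s" x] x(2) by blast
qed

lemma comps_eq_of_mem: "C \<in> comps f t0 t1 s \<Longrightarrow> x \<in> C \<Longrightarrow> C = connected_component_set (sublevel f t0 t1 s) x"
proof -
  assume "C \<in> comps f t0 t1 s" "x \<in> C"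
  then obtain y where "C = connected_component_set (sublevel f t0 t1 s) y" unfolding comps_def by auto
  thus ?thesis using connected_component_eq \<open>x \<in> C\<close> by metis
qed

lemma comps_cc: "x \<in> sublevel f t0 t1 s \<Longrightarrow> connected_component_set (sublevel f t0 t1 s) x \<in> comps f t0 t1 s"
  unfolding comps_def by auto

lemma comps_up:
  assumes "s \<le> t" "C \<in> comps f t0 t1 s" "C' \<in> comps f t0 t1 t"
  shows "C \<subseteq> C' \<longleftrightarrow> C \<inter> C' \<noteq> {}"
proof
  assume "C \<subseteq> C'" thus "C \<inter> C' \<noteq> {}" using comps_sub[OF assms(2)] by auto
next
  assume "C \<inter> C' \<noteq> {}"
  then obtain x where x: "x \<in> C" "x \<in> C'" by auto
  have "C = connected_component_set (sublevel f t0 t1 s) x" using comps_eq_of_mem[OF assms(2) x(1)] .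
  also have "\<dots> \<subseteq> connected_component_set (sublevel f t0 t1 t) x"
    by (rule connected_component_mono[OF sublevel_mono[OF assms(1)]])
  also have "\<dots> = C'" using comps_eq_of_mem[OF assms(3) x(2)] by simp
  finally show "C \<subseteq> C'" .
qed

lemma PHvec_comb:
  assumes "finite G" "\<And>a. a \<in> G \<Longrightarrow> u a \<in> PHvec f t0 t1 s"
  shows "(\<lambda>C. \<Sum>a\<in>G. g a * u a C) \<in> PHvec f t0 t1 s"
proof -
  have sub: "{C. (\<Sum>a\<in>G. g a * u a C) \<noteq> 0} \<subseteq> (\<Union>a\<in>G. {C. u a C \<noteq> 0})"
  proof
    fix C assume "C \<in> {C. (\<Sum>a\<in>G. g a * u a C) \<noteq> 0}"
    then obtain a where "a \<in> G" "g a * u a C \<noteq> 0" using sum.neutral by (metis (mono_tags, lifting) mem_Collect_eq)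
    thus "C \<in> (\<Union>a\<in>G. {C. u a C \<noteq> 0})" by auto
  qed
  have "finite (\<Union>a\<in>G. {C. u a C \<noteq> 0})" using assms unfolding PHvec_def by auto
  moreover have "(\<Union>a\<in>G. {C. u a C \<noteq> 0}) \<subseteq> comps f t0 t1 s" using assms(2) unfolding PHvec_def by auto
  ultimately show ?thesis using sub unfolding PHvec_def by (auto intro: finite_subset)
qed

lemma comb_eq_sum: "(\<lambda>C. \<Sum>a\<in>G. g a * u a C) = (\<Sum>a\<in>G. fscale (g a) (u a))"
  by (rule ext) (simp add: sum_fun_apply fscale_def)

lemma PHmap_alt:
  assumes "finite F" "{C. w C \<noteq> 0} \<subseteq> F"
  shows "PHmap f t0 t1 s t w = (\<lambda>C'. if C' \<in> comps f t0 t1 t then \<Sum>C\<in>{C\<in>F. C \<subseteq> C'}. w C else 0)"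
  unfolding PHmap_def
proof (rule ext)
  fix C'
  have "(\<Sum>C\<in>{C. w C \<noteq> 0 \<and> C \<subseteq> C'}. w C) = (\<Sum>C\<in>{C\<in>F. C \<subseteq> C'}. w C)"
    by (rule sum.mono_neutral_left) (use assms in auto)
  thus "(if C' \<in> comps f t0 t1 t then \<Sum>C\<in>{C. w C \<noteq> 0 \<and> C \<subseteq> C'}. w C else 0) =
        (if C' \<in> comps f t0 t1 t then \<Sum>C\<in>{C\<in>F. C \<subseteq> C'}. w C else 0)" by simp
qed

lemma PHmap_lin:
  assumes "finite G" "\<And>a. a \<in> G \<Longrightarrow> u a \<in> PHvec f t0 t1 s"
  shows "PHmap f t0 t1 s t (\<lambda>C. \<Sum>a\<in>G. g a * u a C) = (\<lambda>C'. \<Sum>a\<in>G. g a * PHmap f t0 t1 s t (u a) C')"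
proof -
  define F where "F = (\<Union>a\<in>G. {C. u a C \<noteq> 0})"
  have fF: "finite F" using assms unfolding PHvec_def F_def by auto
  have sF: "{C. (\<Sum>a\<in>G. g a * u a C) \<noteq> 0} \<subseteq> F"
  proof
    fix C assume "C \<in> {C. (\<Sum>a\<in>G. g a * u a C) \<noteq> 0}"
    then obtain a where "a \<in> G" "g a * u a C \<noteq> 0" using sum.neutral by (metis (mono_tags, lifting) mem_Collect_eq)
    thus "C \<in> F" unfolding F_def by auto
  qed
  have sa: "\<And>a. a \<in> G \<Longrightarrow> {C. u a C \<noteq> 0} \<subseteq> F" unfolding F_def by auto
  show ?thesis
    unfolding PHmap_alt[OF fF sF]
  proof (rule ext)
    fix C'
    show "(if C' \<in> comps f t0 t1 t then \<Sum>C\<in>{C \<in> F. C \<subseteq> C'}. \<Sum>a\<in>G. g a * u a C else 0) =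
          (\<Sum>a\<in>G. g a * PHmap f t0 t1 s t (u a) C')"
    proof (cases "C' \<in> comps f t0 t1 t")
      case True
      have "(\<Sum>C\<in>{C \<in> F. C \<subseteq> C'}. \<Sum>a\<in>G. g a * u a C) = (\<Sum>a\<in>G. \<Sum>C\<in>{C \<in> F. C \<subseteq> C'}. g a * u a C)"
        by (rule sum.swap)
      also have "\<dots> = (\<Sum>a\<in>G. g a * PHmap f t0 t1 s t (u a) C')"
      proof (rule sum.cong[OF refl])
        fix a assume "a \<in> G"
        show "(\<Sum>C\<in>{C \<in> F. C \<subseteq> C'}. g a * u a C) = g a * PHmap f t0 t1 s t (u a) C'"
          unfolding PHmap_alt[OF fF sa[OF \<open>a \<in> G\<close>]] using True by (simp add: sum_distrib_left)
      qed
      finally show ?thesis using True by simp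
    next
      case False
      thus ?thesis unfolding PHmap_def by simp
    qed
  qed
qed

lemma sum_supp_restrict:
  assumes "finite G"
  shows "(\<Sum>a\<in>{a. (if a \<in> G then g a else 0) \<noteq> 0}. (if a \<in> G then g a else 0) * X a) = (\<Sum>a\<in>G. g a * (X a :: 'k::field))"
proof -
  have "(\<Sum>a\<in>{a. (if a \<in> G then g a else 0) \<noteq> 0}. (if a \<in> G then g a else 0) * X a)
       = (\<Sum>a\<in>G. (if a \<in> G then g a else 0) * X a)"
    by (rule sum.mono_neutral_left) (use assms in auto)
  also have "\<dots> = (\<Sum>a\<in>G. g a * X a)" by (rule sum.cong) auto
  finally show ?thesis .
qed

lemma bc_basis:
  assumes "PH0_barcode f t0 t1 J (v :: 'i \<Rightarrow> real \<Rightarrow> real set \<Rightarrow> 'k::field)" "w \<in> PHvec f t0 t1 s"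
  shows "\<exists>!g. (\<forall>a. g a \<noteq> 0 \<longrightarrow> s \<in> J a) \<and> finite {a. g a \<noteq> 0} \<and>
        w = (\<lambda>C. \<Sum>a\<in>{a. g a \<noteq> 0}. g a * v a s C)"
  using assms unfolding PH0_barcode_def
  apply (elim conjE)
  apply (drule spec[of _ s])
  apply (drule bspec, assumption)
  apply assumption
  done

lemma basis_uniq:
  assumes B: "PH0_barcode f t0 t1 J (v :: 'i \<Rightarrow> real \<Rightarrow> real set \<Rightarrow> 'k::field)"
    and G: "finite G" "G \<subseteq> {a. t \<in> J a}"
    and eq: "(\<lambda>C. \<Sum>a\<in>G. g a * v a t C) = (\<lambda>C. \<Sum>a\<in>G. g' a * v a t C)"
    and a: "a \<in> G"
  shows "g a = g' a"
proof -
  define w where "w = (\<lambda>C. \<Sum>a\<in>G. g a * v a t C)"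
  have vin: "\<And>a. a \<in> G \<Longrightarrow> v a t \<in> PHvec f t0 t1 t" using B G unfolding PH0_barcode_def by auto
  have w: "w \<in> PHvec f t0 t1 t" unfolding w_def by (rule PHvec_comb[OF G(1) vin])
  define P where "P = (\<lambda>h::'i \<Rightarrow> 'k. (\<forall>a. h a \<noteq> 0 \<longrightarrow> t \<in> J a) \<and> finite {a. h a \<noteq> 0} \<and>
        w = (\<lambda>C. \<Sum>a\<in>{a. h a \<noteq> 0}. h a * v a t C))"
  have ex1: "\<exists>!h. P h" using bc_basis[OF B w] unfolding P_def .
  have gen: "P (\<lambda>x. if x \<in> G then g0 x else 0)"
    if w0: "w = (\<lambda>C. \<Sum>a\<in>G. g0 a * v a t C)" for g0
  proof -
    have c1: "\<forall>a. (if a \<in> G then g0 a else 0) \<noteq> 0 \<longrightarrow> t \<in> J a" using G(2) by auto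
    have c2: "finite {a. (if a \<in> G then g0 a else 0) \<noteq> 0}"
      by (rule finite_subset[OF _ G(1)]) auto
    have c3: "w = (\<lambda>C. \<Sum>a\<in>{a. (if a \<in> G then g0 a else 0) \<noteq> 0}. (if a \<in> G then g0 a else 0) * v a t C)"
      unfolding sum_supp_restrict[OF G(1)] by (rule w0)
    show ?thesis unfolding P_def using c1 c2 c3 by blast
  qed
  define h where "h = (\<lambda>x. if x \<in> G then g x else 0)"
  define h' where "h' = (\<lambda>x. if x \<in> G then g' x else 0)"
  have Ph: "P h" unfolding h_def by (rule gen) (simp add: w_def)
  have Ph': "P h'" unfolding h'_def by (rule gen) (simp add: w_def eq)
  have "h = h'" using ex1 Ph Ph' by blast
  hence "h a = h' a" by simp
  thus ?thesis using a unfolding h_def h'_def by simp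
qed

lemma in_span_ind:
  assumes "finite K" "{C. w C \<noteq> 0} \<subseteq> K"
  shows "w \<in> FV.span (ind ` K)"
proof -
  have "w = (\<Sum>C\<in>K. fscale (w C) (ind C))"
  proof (rule ext)
    fix x
    have "(\<Sum>C\<in>K. fscale (w C) (ind C)) x = (\<Sum>C\<in>K. if x = C then w C else 0)"
      by (auto simp: sum_fun_apply fscale_def ind_def intro!: sum.cong)
    also have "\<dots> = w x" using assms by (auto simp: sum.delta)
    finally show "w x = (\<Sum>C\<in>K. fscale (w C) (ind C)) x" by simp
  qed
  also have "\<dots> \<in> FV.span (ind ` K)"
    by (intro FV.span_sum FV.span_scale FV.span_base) auto
  finally show ?thesis .
qed

lemma ind_PHvec: "C \<in> comps f t0 t1 s \<Longrightarrow> (ind C :: real set \<Rightarrow> 'k::field) \<in> PHvec f t0 t1 s"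
  unfolding PHvec_def ind_def by auto

lemma PHmap_ind:
  assumes "s \<le> t" "C \<in> comps f t0 t1 s" "C' \<in> comps f t0 t1 t" "C \<subseteq> C'"
  shows "PHmap f t0 t1 s t (ind C :: real set \<Rightarrow> 'k::field) = ind C'"
proof (rule ext)
  fix C''
  show "PHmap f t0 t1 s t (ind C) C'' = (ind C' C'' :: 'k)"
  proof (cases "C'' \<in> comps f t0 t1 t")
    case True
    have "C \<subseteq> C'' \<longleftrightarrow> C'' = C'"
    proof
      assume "C \<subseteq> C''"
      then obtain x where "x \<in> C" "x \<in> C''" using comps_sub[OF assms(2)] by auto
      thus "C'' = C'" using comps_eq_of_mem[OF True] comps_eq_of_mem[OF assms(3)] assms(4) by blast
    qed (use assms in auto)
    hence "{X. ind C X \<noteq> (0::'k) \<and> X \<subseteq> C''} = (if C'' = C' then {C} else {})"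
      by (auto simp: ind_def)
    thus ?thesis using True unfolding PHmap_def by (auto simp: ind_def)
  next
    case False
    hence "C'' \<noteq> C'" using assms by auto
    thus ?thesis using False unfolding PHmap_def by (auto simp: ind_def)
  qed
qed

lemma PHmap_supp:
  assumes "w \<in> PHvec f t0 t1 s"
  shows "{C'. PHmap f t0 t1 s t w C' \<noteq> 0} \<subseteq> Kset f t0 t1 s t"
proof
  fix C' assume "C' \<in> {C'. PHmap f t0 t1 s t w C' \<noteq> 0}"
  hence C': "C' \<in> comps f t0 t1 t" and ne: "(\<Sum>C\<in>{C. w C \<noteq> 0 \<and> C \<subseteq> C'}. w C) \<noteq> 0"
    unfolding PHmap_def by (auto split: if_splits)
  obtain C where C: "w C \<noteq> 0" "C \<subseteq> C'" using ne sum.neutral by (metis (mono_tags, lifting) mem_Collect_eq)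
  have "C \<in> comps f t0 t1 s" using C(1) assms unfolding PHvec_def by auto
  then obtain x where "x \<in> C" "x \<in> sublevel f t0 t1 s" using comps_sub by blast
  thus "C' \<in> Kset f t0 t1 s t" unfolding Kset_def sublevel_def using C' C(2) by auto
qed

lemma LA_main:
  assumes B: "PH0_barcode f t0 t1 J (v :: 'i \<Rightarrow> real \<Rightarrow> real set \<Rightarrow> 'k::field)"
    and st: "s \<le> t" and fK: "finite (Kset f t0 t1 s t)"
  shows "finite (Aset J s t) \<and> card (Aset J s t) = card (Kset f t0 t1 s t)"
proof -
  define A where "A = Aset J s t"
  define K where "K = Kset f t0 t1 s t"
  define vt where "vt = (\<lambda>a. v a t)"
  define V where "V = vt ` A"
  define E where "E = (ind ` K :: (real set \<Rightarrow> 'k) set)"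
  have vin: "\<And>a s. s \<in> J a \<Longrightarrow> v a s \<in> PHvec f t0 t1 s" using B unfolding PH0_barcode_def by auto
  have vmap: "\<And>a s t. s \<le> t \<Longrightarrow> s \<in> J a \<Longrightarrow> PHmap f t0 t1 s t (v a s) = (if t \<in> J a then v a t else (\<lambda>_. 0))"
    using B unfolding PH0_barcode_def by auto
  have inj: "inj_on vt {a. t \<in> J a}"
  proof (rule inj_onI, rule ccontr)
    fix a a' assume a: "a \<in> {a. t \<in> J a}" "a' \<in> {a. t \<in> J a}" "vt a = vt a'" "a \<noteq> a'"
    define g where "g = (\<lambda>x. if x = a then (1::'k) else 0)"
    define g' where "g' = (\<lambda>x. if x = a' then (1::'k) else 0)"
    have "(\<lambda>C. \<Sum>x\<in>{a,a'}. g x * v x t C) = (\<lambda>C. \<Sum>x\<in>{a,a'}. g' x * v x t C)"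
      using a unfolding g_def g'_def vt_def by (auto simp: fun_eq_iff)
    from basis_uniq[OF B _ _ this] a have "g a = g' a" by auto
    thus False using a(4) unfolding g_def g'_def by simp
  qed
  have injA: "inj_on vt A" by (rule inj_on_subset[OF inj]) (auto simp: A_def Aset_def)
  have indV: "\<not> FV.dependent V"
  proof
    assume "FV.dependent V"
    then obtain T u where T: "finite T" "T \<subseteq> V" "(\<Sum>x\<in>T. fscale (u x) x) = 0" "\<exists>x\<in>T. u x \<noteq> 0"
      unfolding FV.dependent_explicit by blast
    define G where "G = {a \<in> A. vt a \<in> T}"
    have TG: "T = vt ` G" using T(2) unfolding G_def V_def by auto
    have injG: "inj_on vt G" by (rule inj_on_subset[OF injA]) (auto simp: G_def)
    have fG: "finite G" using T(1) TG injG finite_imageD by blast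
    have GA: "G \<subseteq> {a. t \<in> J a}" unfolding G_def A_def Aset_def by auto
    have "(\<Sum>x\<in>T. fscale (u x) x) = (\<Sum>a\<in>G. fscale (u (vt a)) (vt a))"
      unfolding TG by (rule sum.reindex[OF injG, unfolded comp_def])
    also have "\<dots> = (\<lambda>C. \<Sum>a\<in>G. u (vt a) * v a t C)" by (simp add: comb_eq_sum vt_def)
    finally have "(\<lambda>C. \<Sum>a\<in>G. u (vt a) * v a t C) = (\<lambda>C. \<Sum>a\<in>G. (\<lambda>_. 0) a * v a t C)"
      using T(3) by (auto simp: fun_eq_iff)
    from basis_uniq[OF B fG GA this] have "\<And>a. a \<in> G \<Longrightarrow> u (vt a) = 0" by auto
    thus False using T(4) TG by auto
  qed
  have fE: "finite E" using fK unfolding E_def K_def by auto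
  have VE: "V \<subseteq> FV.span E"
  proof
    fix y assume "y \<in> V"
    then obtain a where a: "a \<in> A" "y = v a t" unfolding V_def vt_def by auto
    have "y = PHmap f t0 t1 s t (v a s)" using a vmap[OF st] unfolding A_def Aset_def by auto
    moreover have "{C'. PHmap f t0 t1 s t (v a s) C' \<noteq> 0} \<subseteq> K"
      unfolding K_def by (rule PHmap_supp) (use a vin in \<open>auto simp: A_def Aset_def\<close>)
    ultimately show "y \<in> FV.span E" unfolding E_def using in_span_ind[OF fK[folded K_def]] by simp
  qed
  have fV: "finite V" and cV: "card V \<le> card E" using FV.independent_span_bound[OF fE indV VE] by auto
  have indE: "\<not> FV.dependent E"
  proof
    assume "FV.dependent E"
    then obtain T u y0 where T: "finite T" "T \<subseteq> E" "(\<Sum>x\<in>T. fscale (u x) x) = 0" and y0: "y0 \<in> T" "u y0 \<noteq> 0"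
      unfolding FV.dependent_explicit by blast
    obtain C0 where C0: "y0 = ind C0" using y0 T(2) unfolding E_def by auto
    have "0 = (\<Sum>x\<in>T. fscale (u x) x) C0" using T(3) by simp
    also have "\<dots> = (\<Sum>x\<in>T. u x * x C0)" by (simp add: sum_fun_apply fscale_def)
    also have "\<dots> = (\<Sum>x\<in>T. if x = y0 then u x else 0)"
    proof (rule sum.cong[OF refl])
      fix x assume "x \<in> T"
      then obtain C where "x = ind C" using T(2) unfolding E_def by auto
      show "u x * x C0 = (if x = y0 then u x else 0)"
      proof (cases "C = C0")
        case True thus ?thesis using C0 \<open>x = ind C\<close> by (simp add: ind_def)
      next
        case False
        have "x C0 = 0" using False \<open>x = ind C\<close> by (simp add: ind_def)
        moreover have "y0 C0 = 1" using C0 by (simp add: ind_def)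
        ultimately show ?thesis by auto
      qed
    qed
    also have "\<dots> = u y0" using T(1) y0 by (simp add: sum.delta)
    finally show False using y0 by simp
  qed
  have EV: "E \<subseteq> FV.span V"
  proof
    fix y assume "y \<in> E"
    then obtain C' where C': "C' \<in> K" "y = ind C'" unfolding E_def by auto
    then obtain x where x: "x \<in> C'" "f x \<le> s" and C'c: "C' \<in> comps f t0 t1 t" unfolding K_def Kset_def by auto
    have "x \<in> sublevel f t0 t1 s" using x comps_sub[OF C'c] unfolding sublevel_def by auto
    define C where "C = connected_component_set (sublevel f t0 t1 s) x"
    have Cc: "C \<in> comps f t0 t1 s" unfolding C_def by (rule comps_cc) fact
    have xC: "x \<in> C" unfolding C_def using \<open>x \<in> sublevel f t0 t1 s\<close> by simp
    have CC': "C \<subseteq> C'" using comps_up[OF st Cc C'c] xC x(1) by auto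
    have "(ind C :: real set \<Rightarrow> 'k) \<in> PHvec f t0 t1 s" by (rule ind_PHvec[OF Cc])
    then obtain g where g: "\<forall>a. g a \<noteq> 0 \<longrightarrow> s \<in> J a" "finite {a. g a \<noteq> 0}"
        "ind C = (\<lambda>C. \<Sum>a\<in>{a. g a \<noteq> 0}. g a * v a s C)"
      using ex1_implies_ex[OF bc_basis[OF B \<open>ind C \<in> PHvec f t0 t1 s\<close>]] by blast
    define G where "G = {a. g a \<noteq> 0}"
    have "y = PHmap f t0 t1 s t (ind C)" by (simp add: C'(2) PHmap_ind[OF st Cc C'c CC'])
    also have "\<dots> = (\<lambda>C'. \<Sum>a\<in>G. g a * PHmap f t0 t1 s t (v a s) C')"
      unfolding g(3) G_def by (rule PHmap_lin) (use g vin in auto)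
    also have "\<dots> = (\<Sum>a\<in>G. fscale (g a) (PHmap f t0 t1 s t (v a s)))" by (rule comb_eq_sum)
    also have "\<dots> \<in> FV.span V"
    proof (intro FV.span_sum FV.span_scale)
      fix a assume "a \<in> G"
      hence sa: "s \<in> J a" using g unfolding G_def by auto
      show "PHmap f t0 t1 s t (v a s) \<in> FV.span V"
      proof (cases "t \<in> J a")
        case True
        hence "a \<in> A" using sa unfolding A_def Aset_def by auto
        thus ?thesis using vmap[OF st sa] True by (auto simp: V_def vt_def intro!: FV.span_base)
      next
        case False
        thus ?thesis using vmap[OF st sa] FV.span_zero by (simp add: zero_fun_def)
      qed
    qed
    finally show "y \<in> FV.span V" .
  qed
  have cE: "card E \<le> card V" using FV.independent_span_bound[OF fV indE EV] by auto
  have injind: "inj_on (ind :: real set \<Rightarrow> real set \<Rightarrow> 'k) K"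
    by (rule inj_onI) (auto simp: ind_def fun_eq_iff split: if_splits)
  have "card E = card K" unfolding E_def using card_image[OF injind] .
  moreover have "card V = card A" unfolding V_def using card_image[OF injA] .
  moreover have "finite A" using fV injA finite_imageD unfolding V_def by blast
  ultimately show ?thesis using cV cE unfolding A_def K_def by simp
qed

lemma I_mem: "x \<in> Ioo_ereal t0 t1 \<longleftrightarrow> t0 < ereal x \<and> ereal x < t1"
  unfolding Ioo_ereal_def by simp

lemma I_Icc: "x \<in> Ioo_ereal t0 t1 \<Longrightarrow> y \<in> Ioo_ereal t0 t1 \<Longrightarrow> {x..y} \<subseteq> Ioo_ereal t0 t1"
proof
  fix z assume "x \<in> Ioo_ereal t0 t1" "y \<in> Ioo_ereal t0 t1" "z \<in> {x..y}"
  hence "t0 < ereal x" "ereal x \<le> ereal z" "ereal z \<le> ereal y" "ereal y < t1" by (auto simp: I_mem)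
  thus "z \<in> Ioo_ereal t0 t1" unfolding I_mem by (meson less_le_trans le_less_trans)
qed

lemma first_in:
  fixes f :: "real \<Rightarrow> real"
  assumes "continuous_on {lo..hi} f" "closed T" "x0 \<in> {lo..hi}" "f x0 \<in> T"
  shows "\<exists>m\<in>{lo..hi}. f m \<in> T \<and> (\<forall>t\<in>{lo..hi}. f t \<in> T \<longrightarrow> m \<le> t)"
proof -
  have cl: "closed ({lo..hi} \<inter> f -` T)" by (rule continuous_closed_preimage[OF assms(1) closed_atLeastAtMost assms(2)])
  have "compact ({lo..hi} \<inter> ({lo..hi} \<inter> f -` T))" by (rule compact_Int_closed[OF compact_Icc cl])
  hence co: "compact ({lo..hi} \<inter> f -` T)" by (simp add: Int_absorb1)
  have "{lo..hi} \<inter> f -` T \<noteq> {}" using assms by auto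
  from compact_attains_inf[OF co this] show ?thesis by auto
qed

lemma last_in:
  fixes f :: "real \<Rightarrow> real"
  assumes "continuous_on {lo..hi} f" "closed T" "x0 \<in> {lo..hi}" "f x0 \<in> T"
  shows "\<exists>m\<in>{lo..hi}. f m \<in> T \<and> (\<forall>t\<in>{lo..hi}. f t \<in> T \<longrightarrow> t \<le> m)"
proof -
  have cl: "closed ({lo..hi} \<inter> f -` T)" by (rule continuous_closed_preimage[OF assms(1) closed_atLeastAtMost assms(2)])
  have "compact ({lo..hi} \<inter> ({lo..hi} \<inter> f -` T))" by (rule compact_Int_closed[OF compact_Icc cl])
  hence co: "compact ({lo..hi} \<inter> f -` T)" by (simp add: Int_absorb1)
  have "{lo..hi} \<inter> f -` T \<noteq> {}" using assms by auto
  from compact_attains_sup[OF co this] show ?thesis by auto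
qed

lemma FH:
  fixes f :: "real \<Rightarrow> real"
  assumes cont: "continuous_on (Ioo_ereal t0 t1) f"
    and p0: "p0 \<in> Ioo_ereal t0 t1" "\<forall>x\<in>Ioo_ereal t0 t1. x \<le> p0 \<longrightarrow> f x < c"
    and tau: "\<tau> = t0 \<or> (\<exists>r\<in>Ioo_ereal t0 t1. \<tau> = ereal r \<and> f r \<noteq> c)"
  shows "(first_hit f t0 t1 c \<tau> = t1 \<and> (\<forall>t\<in>Ioo_ereal t0 t1. \<tau> < ereal t \<longrightarrow> f t \<noteq> c)) \<or>
         (\<exists>m\<in>Ioo_ereal t0 t1. first_hit f t0 t1 c \<tau> = ereal m \<and> \<tau> < ereal m \<and> f m = c \<and>
            (\<forall>t\<in>Ioo_ereal t0 t1. \<tau> < ereal t \<and> t < m \<longrightarrow> f t \<noteq> c))"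
proof -
  define S where "S = {t \<in> Ioo_ereal t0 t1. \<tau> < ereal t \<and> f t = c}"
  have fh: "first_hit f t0 t1 c \<tau> = (if S = {} then t1 else Inf (ereal ` S))"
    unfolding first_hit_def S_def Let_def by simp
  show ?thesis
  proof (cases "S = {}")
    case True
    thus ?thesis using fh unfolding S_def by auto
  next
    case False
    then obtain s0 where s0: "s0 \<in> S" by auto
    define lo where "lo = (if \<tau> = t0 then p0 else real_of_ereal \<tau>)"
    have lo_all: "lo \<in> Ioo_ereal t0 t1 \<and> f lo \<noteq> c \<and> \<tau> \<le> ereal lo \<and> (\<forall>t\<in>S. lo < t)"
    proof (cases "\<tau> = t0")
      case True
      have "\<forall>t\<in>S. p0 < t" using p0(2) unfolding S_def by (auto simp: not_le[symmetric])
      thus ?thesis using True p0 unfolding lo_def by (auto simp: I_mem less_imp_le)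
    next
      case False
      then obtain r where r: "r \<in> Ioo_ereal t0 t1" "\<tau> = ereal r" "f r \<noteq> c" using tau by auto
      thus ?thesis using False unfolding lo_def S_def by auto
    qed
    hence lo: "lo \<in> Ioo_ereal t0 t1" "f lo \<noteq> c" "\<tau> \<le> ereal lo" "\<forall>t\<in>S. lo < t" by auto
    have s0I: "s0 \<in> Ioo_ereal t0 t1" "f s0 = c" using s0 unfolding S_def by auto
    have "lo < s0" using lo(4) s0 by auto
    have contI: "continuous_on {lo..s0} f" by (rule continuous_on_subset[OF cont I_Icc[OF lo(1) s0I(1)]])
    obtain m where m: "m \<in> {lo..s0}" "f m = c" "\<forall>t\<in>{lo..s0}. f t = c \<longrightarrow> m \<le> t"
      using first_in[OF contI closed_singleton, of s0 c] s0I \<open>lo < s0\<close> by auto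
    have "m \<noteq> lo" using m lo(2) by auto
    hence mlo: "lo < m" using m by auto
    have mI: "m \<in> Ioo_ereal t0 t1" using I_Icc[OF lo(1) s0I(1)] m(1) by auto
    have "ereal lo < ereal m" using mlo by simp
    hence taum: "\<tau> < ereal m" using lo(3) by (rule le_less_trans[rotated])
    have mS: "m \<in> S" unfolding S_def using mI taum m(2) by auto
    have mmin: "\<forall>t\<in>S. m \<le> t"
    proof
      fix t assume "t \<in> S"
      show "m \<le> t"
      proof (cases "t \<le> s0")
        case True
        thus ?thesis using m(3) lo(4) \<open>t \<in> S\<close> unfolding S_def by (auto simp: less_imp_le)
      next
        case False thus ?thesis using m(1) by auto
      qed
    qed
    have "Inf (ereal ` S) = ereal m"
      by (rule antisym) (use mS mmin in \<open>auto intro: Inf_lower Inf_greatest\<close>)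
    hence "first_hit f t0 t1 c \<tau> = ereal m" using fh False by simp
    moreover have "\<forall>t\<in>Ioo_ereal t0 t1. \<tau> < ereal t \<and> t < m \<longrightarrow> f t \<noteq> c"
      using mmin unfolding S_def by force
    ultimately show ?thesis using mI taum m(2) by blast
  qed
qed

lemma E0:
  fixes f :: "real \<Rightarrow> real"
  assumes "t0 < t1" "Limsup (left_end_filter t0) (\<lambda>t. ereal (f t)) < ereal b"
  shows "\<exists>p0\<in>Ioo_ereal t0 t1. \<forall>x\<in>Ioo_ereal t0 t1. x \<le> p0 \<longrightarrow> f x < b"
proof -
  have ev: "eventually (\<lambda>x. ereal (f x) < ereal b) (left_end_filter t0)"
    by (rule Limsup_lessD[OF assms(2)])
  show ?thesis
  proof (cases "t0 = -\<infinity>")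
    case True
    have "eventually (\<lambda>x. f x < b) at_bot" using ev True by (simp add: left_end_filter_def)
    then obtain N where N: "\<forall>x\<le>N. f x < b" by (auto simp: eventually_at_bot_linorder)
    obtain z where z: "t0 < ereal z" "ereal z < t1" using ereal_dense2[OF assms(1)] by auto
    have "ereal (min N z) \<le> ereal z" by simp
    hence "ereal (min N z) < t1" using z(2) by (rule le_less_trans)
    moreover have "t0 < ereal (min N z)" using True by simp
    ultimately have "min N z \<in> Ioo_ereal t0 t1" unfolding I_mem by blast
    thus ?thesis using N by (intro bexI[of _ "min N z"]) auto
  next
    case False
    have "t0 \<noteq> \<infinity>" using assms(1) by auto
    then obtain a where a: "t0 = ereal a" using False by (cases t0) auto
    have "eventually (\<lambda>x. f x < b) (at_right a)" using ev a False by (simp add: left_end_filter_def)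
    then obtain e where e: "e > a" "\<forall>y>a. y < e \<longrightarrow> f y < b"
      unfolding eventually_at_right_field by auto
    have "t0 < min (ereal e) t1" using a e(1) assms(1) by auto
    then obtain z where z: "t0 < ereal z" "ereal z < min (ereal e) t1" using ereal_dense2 by blast
    have "z \<in> Ioo_ereal t0 t1" using z by (auto simp: I_mem)
    moreover have "\<forall>x\<in>Ioo_ereal t0 t1. x \<le> z \<longrightarrow> f x < b"
      using e z a by (auto simp: I_mem)
    ultimately show ?thesis by blast
  qed
qed

lemma E1:
  fixes f :: "real \<Rightarrow> real"
  assumes "t0 < t1" "ereal d < Liminf (right_end_filter t1) (\<lambda>t. ereal (f t))"
  shows "\<exists>c1\<in>Ioo_ereal t0 t1. \<forall>x\<in>Ioo_ereal t0 t1. c1 \<le> x \<longrightarrow> d < f x"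
proof -
  have ev: "eventually (\<lambda>x. ereal d < ereal (f x)) (right_end_filter t1)"
    by (rule less_LiminfD[OF assms(2)])
  show ?thesis
  proof (cases "t1 = \<infinity>")
    case True
    have "eventually (\<lambda>x. d < f x) at_top" using ev True by (simp add: right_end_filter_def)
    then obtain N where N: "\<forall>x\<ge>N. d < f x" by (auto simp: eventually_at_top_linorder)
    obtain z where z: "t0 < ereal z" "ereal z < t1" using ereal_dense2[OF assms(1)] by auto
    obtain M where M: "z \<le> M" "N \<le> M" by (meson max.cobounded1 max.cobounded2)
    have "ereal z \<le> ereal M" using M by simp
    hence "t0 < ereal M" using z(1) by (rule less_le_trans[rotated])
    moreover have "ereal M < t1" using True by simp
    ultimately have "M \<in> Ioo_ereal t0 t1" unfolding I_mem by blast
    thus ?thesis using N M by (intro bexI[of _ M]) auto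
  next
    case False
    have "t1 \<noteq> -\<infinity>" using assms(1) by auto
    then obtain a where a: "t1 = ereal a" using False by (cases t1) auto
    have "eventually (\<lambda>x. d < f x) (at_left a)" using ev a False by (simp add: right_end_filter_def)
    then obtain e where e: "e < a" "\<forall>y>e. y < a \<longrightarrow> d < f y"
      unfolding eventually_at_left_field by auto
    have "max (ereal e) t0 < t1" using a e(1) assms(1) by auto
    then obtain z where z: "max (ereal e) t0 < ereal z" "ereal z < t1" using ereal_dense2 by blast
    have "z \<in> Ioo_ereal t0 t1" using z by (auto simp: I_mem)
    moreover have "\<forall>x\<in>Ioo_ereal t0 t1. z \<le> x \<longrightarrow> d < f x"
      using e z a by (auto simp: I_mem)
    ultimately show ?thesis by blast
  qed
qed

lemma fh_top: "first_hit f t0 t1 c t1 = t1"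
  unfolding first_hit_def Let_def Ioo_ereal_def by auto

locale WS =
  fixes f :: "real \<Rightarrow> real" and t0 t1 :: ereal and b d p0 c1 :: real
  assumes t01: "t0 < t1" and cont: "continuous_on (Ioo_ereal t0 t1) f" and bd: "b < d"
    and p0I: "p0 \<in> Ioo_ereal t0 t1" and p0f: "\<forall>x\<in>Ioo_ereal t0 t1. x \<le> p0 \<longrightarrow> f x < b"
    and c1I: "c1 \<in> Ioo_ereal t0 t1" and c1f: "\<forall>x\<in>Ioo_ereal t0 t1. c1 \<le> x \<longrightarrow> d < f x"
begin

abbreviation "II \<equiv> Ioo_ereal t0 t1"
abbreviation "tau k \<equiv> wind_b f t0 t1 b d k"
abbreviation "Dh k \<equiv> first_hit f t0 t1 d (tau k)"

lemma contI: "x \<in> II \<Longrightarrow> y \<in> II \<Longrightarrow> continuous_on {x..y} f"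
  by (rule continuous_on_subset[OF cont I_Icc])

lemma p0d: "\<forall>x\<in>II. x \<le> p0 \<longrightarrow> f x < d" using p0f bd by fastforce

lemma step_d:
  assumes "tau k = t0 \<or> (\<exists>r\<in>II. tau k = ereal r \<and> f r = b)"
  shows "(Dh k = t1 \<and> (\<forall>t\<in>II. tau k < ereal t \<longrightarrow> f t \<noteq> d)) \<or>
         (\<exists>m\<in>II. Dh k = ereal m \<and> tau k < ereal m \<and> f m = d \<and>
            (\<forall>t\<in>II. tau k < ereal t \<and> t < m \<longrightarrow> f t \<noteq> d))"
  by (rule FH[OF cont p0I p0d]) (use assms bd in auto)

lemma step_b:
  assumes "m \<in> II" "Dh k = ereal m" "f m = d"
  shows "(tau (Suc k) = t1 \<and> (\<forall>t\<in>II. m < t \<longrightarrow> f t \<noteq> b)) \<or>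
         (\<exists>r\<in>II. tau (Suc k) = ereal r \<and> m < r \<and> f r = b \<and>
            (\<forall>t\<in>II. m < t \<and> t < r \<longrightarrow> f t \<noteq> b))"
  using FH[OF cont p0I p0f, of "ereal m"] assms bd by simp

lemma inv: "k = 0 \<or> tau k = t1 \<or> (\<exists>r\<in>II. tau k = ereal r \<and> f r = b)"
proof (induction k)
  case 0 thus ?case by simp
next
  case (Suc k)
  show ?case
  proof (cases "tau k = t1")
    case True
    hence "Dh k = t1" using fh_top by simp
    thus ?thesis using fh_top by simp
  next
    case False
    hence "tau k = t0 \<or> (\<exists>r\<in>II. tau k = ereal r \<and> f r = b)" using Suc by auto
    hence "Dh k = t1 \<or> (\<exists>m\<in>II. Dh k = ereal m \<and> f m = d)" using step_d by blast
    thus ?thesis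
    proof (elim disjE)
      assume "Dh k = t1"
      thus ?thesis using fh_top by simp
    next
      assume "\<exists>m\<in>II. Dh k = ereal m \<and> f m = d"
      then obtain m where "m \<in> II" "Dh k = ereal m" "f m = d" by blast
      from step_b[OF this] show ?thesis by auto
    qed
  qed
qed

lemma windings_eq: "windings f t0 t1 b d = {k. 1 \<le> k \<and> tau k \<noteq> t1}"
proof -
  have "\<And>k. 1 \<le> k \<Longrightarrow> (t0 < tau k \<and> tau k < t1) \<longleftrightarrow> tau k \<noteq> t1"
  proof -
    fix k :: nat assume "1 \<le> k"
    hence "tau k = t1 \<or> (\<exists>r\<in>II. tau k = ereal r \<and> f r = b)" using inv[of k] by auto
    thus "(t0 < tau k \<and> tau k < t1) \<longleftrightarrow> tau k \<noteq> t1" by (auto simp: I_mem)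
  qed
  thus ?thesis unfolding windings_def by auto
qed

lemma top_stays: "tau k = t1 \<Longrightarrow> tau (Suc k) = t1"
  using fh_top by simp

lemma wind_down: "k \<in> windings f t0 t1 b d \<Longrightarrow> 1 \<le> j \<Longrightarrow> j \<le> k \<Longrightarrow> j \<in> windings f t0 t1 b d"
proof -
  assume k: "k \<in> windings f t0 t1 b d" and j: "1 \<le> j" "j \<le> k"
  have "\<And>i. tau j = t1 \<Longrightarrow> tau (j + i) = t1"
  proof -
    fix i show "tau j = t1 \<Longrightarrow> tau (j + i) = t1" by (induction i) (auto simp: fh_top)
  qed
  from this[of "k - j"] j k show ?thesis unfolding windings_eq by auto
qed

lemma wind_data:
  assumes "Suc j \<in> windings f t0 t1 b d"
  shows "\<exists>m r. m \<in> II \<and> r \<in> II \<and> Dh j = ereal m \<and> tau (Suc j) = ereal r \<and>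
     tau j < ereal m \<and> f m = d \<and> (\<forall>t\<in>II. tau j < ereal t \<and> t < m \<longrightarrow> f t \<noteq> d) \<and>
     m < r \<and> f r = b \<and> (\<forall>t\<in>II. m < t \<and> t < r \<longrightarrow> f t \<noteq> b)"
proof -
  have ne: "tau (Suc j) \<noteq> t1" using assms unfolding windings_eq by auto
  have "tau j \<noteq> t1" using ne top_stays by blast
  hence "tau j = t0 \<or> (\<exists>r\<in>II. tau j = ereal r \<and> f r = b)" using inv[of j] by auto
  from step_d[OF this] obtain m where m: "m \<in> II" "Dh j = ereal m" "tau j < ereal m" "f m = d"
       "\<forall>t\<in>II. tau j < ereal t \<and> t < m \<longrightarrow> f t \<noteq> d"
    using ne fh_top by auto
  from step_b[OF m(1,2,4)] ne obtain r where "r \<in> II" "tau (Suc j) = ereal r" "m < r" "f r = b"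
       "\<forall>t\<in>II. m < t \<and> t < r \<longrightarrow> f t \<noteq> b" by auto
  thus ?thesis using m by blast
qed

end

context WS begin

lemma p0c1: "p0 < c1"
proof (rule ccontr)
  assume "\<not> p0 < c1"
  hence "f c1 < b" using p0f c1I by auto
  moreover have "d < f c1" using c1f c1I by auto
  ultimately show False using bd by auto
qed

lemma lt_c1: "x \<in> II \<Longrightarrow> f x \<le> d \<Longrightarrow> x < c1"
  using c1f by (meson not_le not_less)

lemma gt_p0: "x \<in> II \<Longrightarrow> b \<le> f x \<Longrightarrow> p0 < x"
  using p0f by (meson not_le not_less)

lemma uc: "\<exists>\<eta>>0. \<forall>x\<in>{p0..c1}. \<forall>y\<in>{p0..c1}. \<bar>x - y\<bar> < \<eta> \<longrightarrow> \<bar>f x - f y\<bar> < d - b"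
proof -
  have "uniformly_continuous_on {p0..c1} f"
    by (rule compact_uniformly_continuous[OF contI[OF p0I c1I] compact_Icc])
  hence "\<exists>\<eta>>0. \<forall>x\<in>{p0..c1}. \<forall>y\<in>{p0..c1}. dist y x < \<eta> \<longrightarrow> dist (f y) (f x) < d - b"
    unfolding uniformly_continuous_on_def using bd by auto
  thus ?thesis by (auto simp: dist_real_def abs_minus_commute)
qed

lemma wind_bound:
  assumes eta: "\<eta> > 0" "\<forall>x\<in>{p0..c1}. \<forall>y\<in>{p0..c1}. \<bar>x - y\<bar> < \<eta> \<longrightarrow> \<bar>f x - f y\<bar> < d - b"
  shows "k \<in> windings f t0 t1 b d \<Longrightarrow> \<exists>r. tau k = ereal r \<and> p0 + real k * \<eta> < r \<and> r < c1"
proof (induction k)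
  case 0 thus ?case unfolding windings_def by simp
next
  case (Suc j)
  from wind_data[OF Suc.prems] obtain m r where mr: "m \<in> II" "r \<in> II" "Dh j = ereal m" "tau (Suc j) = ereal r"
     "tau j < ereal m" "f m = d" "m < r" "f r = b" by blast
  have "p0 < m" using gt_p0[OF mr(1)] mr(6) bd by auto
  have "r < c1" using lt_c1[OF mr(2)] mr(8) bd by auto
  have "\<not> \<bar>r - m\<bar> < \<eta>"
  proof
    assume "\<bar>r - m\<bar> < \<eta>"
    hence "\<bar>f r - f m\<bar> < d - b" using eta(2) \<open>p0 < m\<close> \<open>r < c1\<close> mr(7) by auto
    thus False using mr(6,8) bd by auto
  qed
  hence rm: "m + \<eta> \<le> r" using mr(7) by auto
  show ?case
  proof (cases "j = 0")
    case True
    thus ?thesis using rm \<open>p0 < m\<close> mr(4) \<open>r < c1\<close> by auto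
  next
    case False
    hence "j \<in> windings f t0 t1 b d" using wind_down[OF Suc.prems] by auto
    from Suc.IH[OF this] obtain rj where "tau j = ereal rj" "p0 + real j * \<eta> < rj" by blast
    hence "rj < m" using mr(5) by auto
    thus ?thesis using rm \<open>p0 + real j * \<eta> < rj\<close> mr(4) \<open>r < c1\<close> by (auto simp: algebra_simps)
  qed
qed

lemma wind_finite: "finite (windings f t0 t1 b d)"
proof -
  obtain \<eta> where eta: "\<eta> > 0" "\<forall>x\<in>{p0..c1}. \<forall>y\<in>{p0..c1}. \<bar>x - y\<bar> < \<eta> \<longrightarrow> \<bar>f x - f y\<bar> < d - b"
    using uc by blast
  have "windings f t0 t1 b d \<subseteq> {..<nat \<lceil>(c1 - p0) / \<eta>\<rceil>}"
  proof
    fix k assume "k \<in> windings f t0 t1 b d"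
    from wind_bound[OF eta this] obtain r where "p0 + real k * \<eta> < r" "r < c1" by blast
    hence "real k * \<eta> < c1 - p0" by auto
    hence "real k < (c1 - p0) / \<eta>" using eta(1) by (simp add: field_simps)
    hence "real k < real (nat \<lceil>(c1 - p0) / \<eta>\<rceil>)" by linarith
    thus "k \<in> {..<nat \<lceil>(c1 - p0) / \<eta>\<rceil>}" by simp
  qed
  thus ?thesis using finite_subset by blast
qed

lemma wind_interval: "windings f t0 t1 b d = {1..card (windings f t0 t1 b d)}"
proof (cases "windings f t0 t1 b d = {}")
  case True thus ?thesis by simp
next
  case False
  define M where "M = Max (windings f t0 t1 b d)"
  have M: "M \<in> windings f t0 t1 b d" unfolding M_def using Max_in[OF wind_finite False] .
  have le: "\<And>k. k \<in> windings f t0 t1 b d \<Longrightarrow> k \<le> M" unfolding M_def using Max_ge[OF wind_finite] by blast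
  have "windings f t0 t1 b d = {1..M}"
  proof
    show "windings f t0 t1 b d \<subseteq> {1..M}" using le unfolding windings_def by auto
    show "{1..M} \<subseteq> windings f t0 t1 b d" using wind_down[OF M] by auto
  qed
  thus ?thesis by simp
qed

end

context WS begin

definition "nW = card (windings f t0 t1 b d)"
definition "BB k = (if k = 0 then p0 else real_of_ereal (tau k))"
definition "DD k = real_of_ereal (Dh k)"

lemma inW: "k \<in> windings f t0 t1 b d \<longleftrightarrow> 1 \<le> k \<and> k \<le> nW"
  using wind_interval unfolding nW_def by (metis atLeastAtMost_iff)

lemma tauB: "k \<le> nW \<Longrightarrow> (k = 0 \<and> tau k = t0 \<and> BB k = p0) \<or>
   (1 \<le> k \<and> tau k = ereal (BB k) \<and> BB k \<in> II \<and> f (BB k) = b)"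
proof -
  assume k: "k \<le> nW"
  show ?thesis
  proof (cases k)
    case 0 thus ?thesis by (simp add: BB_def)
  next
    case (Suc j)
    hence "Suc j \<in> windings f t0 t1 b d" using inW k by auto
    from wind_data[OF this] obtain r where "r \<in> II" "tau (Suc j) = ereal r" "f r = b" by blast
    thus ?thesis using Suc by (simp add: BB_def)
  qed
qed

lemma BBI: "k \<le> nW \<Longrightarrow> BB k \<in> II \<and> f (BB k) \<le> b"
  using tauB[of k] p0I p0f by fastforce

lemma tau_lt: "k \<le> nW \<Longrightarrow> x \<in> II \<Longrightarrow> BB k < x \<Longrightarrow> tau k < ereal x"
  using tauB[of k] by (auto simp: I_mem)

lemma DDdata: "k \<le> nW \<Longrightarrow> Dh k = ereal (DD k) \<and> DD k \<in> II \<and> f (DD k) = d \<and> tau k < ereal (DD k) \<and>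
   (\<forall>t\<in>II. tau k < ereal t \<and> t < DD k \<longrightarrow> f t \<noteq> d)"
proof -
  assume k: "k \<le> nW"
  show ?thesis
  proof (cases "k < nW")
    case True
    hence "Suc k \<in> windings f t0 t1 b d" using inW by auto
    from wind_data[OF this] obtain m where "m \<in> II" "Dh k = ereal m" "tau k < ereal m" "f m = d"
      "\<forall>t\<in>II. tau k < ereal t \<and> t < m \<longrightarrow> f t \<noteq> d" by blast
    thus ?thesis by (simp add: DD_def)
  next
    case False
    have g: "tau k = t0 \<or> (\<exists>r\<in>II. tau k = ereal r \<and> f r = b)" using tauB[OF k] by auto
    have "\<not> (Dh k = t1 \<and> (\<forall>t\<in>II. tau k < ereal t \<longrightarrow> f t \<noteq> d))"
    proof
      assume A: "Dh k = t1 \<and> (\<forall>t\<in>II. tau k < ereal t \<longrightarrow> f t \<noteq> d)"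
      have B: "BB k \<in> II" "f (BB k) \<le> b" using BBI[OF k] by auto
      have "BB k < c1" using lt_c1[OF B(1)] B(2) bd by auto
      have "f (BB k) \<le> d" "d \<le> f c1" using B bd c1f c1I by auto
      from IVT'[OF this less_imp_le[OF \<open>BB k < c1\<close>] contI[OF B(1) c1I]]
      obtain y where y: "BB k \<le> y" "y \<le> c1" "f y = d" by blast
      have yI: "y \<in> II" using I_Icc[OF B(1) c1I] y by auto
      have "y \<noteq> BB k" using y(3) B(2) bd by auto
      hence "tau k < ereal y" using tau_lt[OF k yI] y(1) by auto
      thus False using A yI y(3) by auto
    qed
    with step_d[OF g] obtain m where "m \<in> II" "Dh k = ereal m" "tau k < ereal m" "f m = d"
      "\<forall>t\<in>II. tau k < ereal t \<and> t < m \<longrightarrow> f t \<noteq> d" by blast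
    thus ?thesis by (simp add: DD_def)
  qed
qed

lemma BD: "k \<le> nW \<Longrightarrow> BB k < DD k"
proof -
  assume k: "k \<le> nW"
  have D: "DD k \<in> II" "f (DD k) = d" "tau k < ereal (DD k)" using DDdata[OF k] by auto
  show ?thesis
  proof (cases "k = 0")
    case True thus ?thesis using gt_p0[OF D(1)] D(2) bd by (simp add: BB_def)
  next
    case False thus ?thesis using tauB[OF k] D(3) by auto
  qed
qed

lemma asc: "k \<le> nW \<Longrightarrow> x \<in> II \<Longrightarrow> BB k \<le> x \<Longrightarrow> x < DD k \<Longrightarrow> f x < d"
proof (rule ccontr)
  assume k: "k \<le> nW" and x: "x \<in> II" "BB k \<le> x" "x < DD k" and "\<not> f x < d"
  have B: "BB k \<in> II" "f (BB k) \<le> b" using BBI[OF k] by auto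
  have "f (BB k) \<le> d" "d \<le> f x" using B bd \<open>\<not> f x < d\<close> by auto
  from IVT'[OF this x(2) contI[OF B(1) x(1)]] obtain y where y: "BB k \<le> y" "y \<le> x" "f y = d" by blast
  have yI: "y \<in> II" using I_Icc[OF B(1) x(1)] y by auto
  have "y \<noteq> BB k" using y(3) B(2) bd by auto
  hence "tau k < ereal y" using tau_lt[OF k yI] y(1) by auto
  thus False using DDdata[OF k] yI y x(3) by auto
qed

lemma ord: "k < nW \<Longrightarrow> DD k < BB (Suc k)"
proof -
  assume k: "k < nW"
  hence "Suc k \<in> windings f t0 t1 b d" using inW by auto
  from wind_data[OF this] obtain m r where "Dh k = ereal m" "tau (Suc k) = ereal r" "m < r" by blast
  thus ?thesis by (simp add: DD_def BB_def)
qed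

lemma desc: "k < nW \<Longrightarrow> x \<in> II \<Longrightarrow> DD k < x \<Longrightarrow> x < BB (Suc k) \<Longrightarrow> b < f x"
proof (rule ccontr)
  assume k: "k < nW" and x: "x \<in> II" "DD k < x" "x < BB (Suc k)" and "\<not> b < f x"
  hence "Suc k \<in> windings f t0 t1 b d" using inW by auto
  from wind_data[OF this] obtain m r where mr: "Dh k = ereal m" "tau (Suc k) = ereal r" "m \<in> II"
     "f m = d" "\<forall>t\<in>II. m < t \<and> t < r \<longrightarrow> f t \<noteq> b" by blast
  have m: "m = DD k" "r = BB (Suc k)" using mr by (auto simp: DD_def BB_def)
  have "f x \<le> b" "b \<le> f m" using \<open>\<not> b < f x\<close> mr(4) bd by auto
  from IVT2'[OF this less_imp_le[OF x(2)[folded m(1)]] contI[OF mr(3) x(1)]]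
  obtain y where y: "m \<le> y" "y \<le> x" "f y = b" by blast
  have yI: "y \<in> II" using I_Icc[OF mr(3) x(1)] y by auto
  have "y \<noteq> m" using y(3) mr(4) bd by auto
  thus False using mr(5) yI y x(3) m by auto
qed

lemma tail: "x \<in> II \<Longrightarrow> DD nW < x \<Longrightarrow> b < f x"
proof (rule ccontr)
  assume x: "x \<in> II" "DD nW < x" and "\<not> b < f x"
  have D: "Dh nW = ereal (DD nW)" "DD nW \<in> II" "f (DD nW) = d" using DDdata[of nW] by auto
  have "Suc nW \<notin> windings f t0 t1 b d" using inW by auto
  hence top: "tau (Suc nW) = t1" unfolding windings_eq by auto
  have nb: "\<forall>t\<in>II. DD nW < t \<longrightarrow> f t \<noteq> b"
    using step_b[OF D(2) D(1) D(3)] top by (auto simp: I_mem)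
  have "f x \<le> b" "b \<le> f (DD nW)" using \<open>\<not> b < f x\<close> D(3) bd by auto
  from IVT2'[OF this less_imp_le[OF x(2)] contI[OF D(2) x(1)]]
  obtain y where y: "DD nW \<le> y" "y \<le> x" "f y = b" by blast
  have yI: "y \<in> II" using I_Icc[OF D(2) x(1)] y by auto
  have "y \<noteq> DD nW" using y(3) D(3) bd by auto
  thus False using nb yI y by auto
qed

end

context WS begin

lemma tailmin: "\<exists>mT>b. \<forall>x\<in>II. DD nW \<le> x \<longrightarrow> mT \<le> f x"
proof -
  have D: "DD nW \<in> II" "f (DD nW) = d" using DDdata[of nW] by auto
  have "DD nW < c1" using lt_c1[OF D(1)] D(2) by auto
  have ne: "{DD nW..c1} \<noteq> {}" using \<open>DD nW < c1\<close> by simp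
  obtain x0 where x0: "x0 \<in> {DD nW..c1}" "\<forall>y\<in>{DD nW..c1}. f x0 \<le> f y"
    using continuous_attains_inf[OF compact_Icc ne contI[OF D(1) c1I]] by blast
  have x0I: "x0 \<in> II" using I_Icc[OF D(1) c1I] x0(1) by blast
  have bx0: "b < f x0"
  proof (cases "x0 = DD nW")
    case True thus ?thesis using D bd by simp
  next
    case False
    hence "DD nW < x0" using x0(1) by simp
    thus ?thesis using tail[OF x0I] by blast
  qed
  define mT where "mT = min (f x0) d"
  have "\<forall>x\<in>II. DD nW \<le> x \<longrightarrow> mT \<le> f x"
  proof (intro ballI impI)
    fix x assume x: "x \<in> II" "DD nW \<le> x"
    show "mT \<le> f x"
    proof (cases "x \<le> c1")
      case True
      hence "f x0 \<le> f x" using x0(2) x(2) by simp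
      thus ?thesis unfolding mT_def by (simp add: min.coboundedI1)
    next
      case False
      hence "d < f x" using c1f x(1) by simp
      thus ?thesis unfolding mT_def by (simp add: min.coboundedI2)
    qed
  qed
  moreover have "b < mT" using bx0 bd unfolding mT_def by simp
  ultimately show ?thesis by blast
qed

lemma descmin: "j < nW \<Longrightarrow> \<exists>e m. DD j \<le> e \<and> e < BB (Suc j) \<and> b < m \<and> (\<forall>y. DD j \<le> y \<and> y \<le> e \<longrightarrow> m \<le> f y)
    \<and> (\<forall>y. e < y \<and> y \<le> BB (Suc j) \<longrightarrow> f y < d)"
proof -
  assume j: "j < nW"
  have D: "DD j \<in> II" "f (DD j) = d" using DDdata[of j] j by auto
  have B: "BB (Suc j) \<in> II" "f (BB (Suc j)) \<le> b" using BBI[of "Suc j"] j by auto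
  have DB: "DD j < BB (Suc j)" using ord[OF j] .
  obtain e where e: "e \<in> {DD j..BB (Suc j)}" "f e \<in> {d..}" "\<forall>y\<in>{DD j..BB (Suc j)}. f y \<in> {d..} \<longrightarrow> y \<le> e"
    using last_in[OF contI[OF D(1) B(1)] closed_atLeast, of "DD j" d] D DB by auto
  have "e \<noteq> BB (Suc j)" using e(2) B(2) bd by auto
  hence eB: "e < BB (Suc j)" using e(1) by auto
  have eI: "e \<in> II" using I_Icc[OF D(1) B(1)] e(1) by auto
  obtain x0 where x0: "x0 \<in> {DD j..e}" "\<forall>y\<in>{DD j..e}. f x0 \<le> f y"
    using continuous_attains_inf[OF compact_Icc _ contI[OF D(1) eI]] e(1) by fastforce
  have x0I: "x0 \<in> II" using I_Icc[OF D(1) eI] x0(1) by auto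
  have "b < f x0"
  proof (cases "x0 = DD j")
    case True thus ?thesis using D bd by auto
  next
    case False thus ?thesis using desc[OF j x0I] x0(1) eB by auto
  qed
  moreover have "\<forall>y. e < y \<and> y \<le> BB (Suc j) \<longrightarrow> f y < d"
  proof (intro allI impI)
    fix y assume y: "e < y \<and> y \<le> BB (Suc j)"
    hence "y \<in> {DD j..BB (Suc j)}" using e(1) by auto
    show "f y < d"
    proof (rule ccontr)
      assume "\<not> f y < d"
      hence "y \<le> e" using e(3) \<open>y \<in> {DD j..BB (Suc j)}\<close> by auto
      thus False using y by auto
    qed
  qed
  ultimately show ?thesis using x0(2) e(1) eB by (intro exI[of _ e] exI[of _ "f x0"]) auto
qed

lemma asc_gen:
  assumes "u \<in> II" "w \<in> II" "s < f w" "\<forall>y. u \<le> y \<and> y < w \<longrightarrow> f y < d"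
  shows "\<exists>t'<d. \<forall>x. u \<le> x \<and> x \<le> w \<and> f x \<le> s \<longrightarrow> (\<forall>y. u \<le> y \<and> y \<le> x \<longrightarrow> f y \<le> t')"
proof (cases "\<exists>x. u \<le> x \<and> x \<le> w \<and> f x \<le> s")
  case False thus ?thesis by (intro exI[of _ "d - 1"]) auto
next
  case True
  then obtain x1 where x1: "x1 \<in> {u..w}" "f x1 \<in> {..s}" by auto
  obtain x' where x': "x' \<in> {u..w}" "f x' \<in> {..s}" "\<forall>y\<in>{u..w}. f y \<in> {..s} \<longrightarrow> y \<le> x'"
    using last_in[OF contI[OF assms(1,2)] closed_atMost x1] by blast
  have "x' \<noteq> w" using x'(2) assms(3) by auto
  hence x'w: "x' < w" using x'(1) by auto
  have x'I: "x' \<in> II" using I_Icc[OF assms(1,2)] x'(1) by auto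
  obtain y0 where y0: "y0 \<in> {u..x'}" "\<forall>y\<in>{u..x'}. f y \<le> f y0"
    using continuous_attains_sup[OF compact_Icc _ contI[OF assms(1) x'I]] x'(1) by fastforce
  have "f y0 < d" using assms(4) y0(1) x'w by auto
  moreover have "\<forall>x. u \<le> x \<and> x \<le> w \<and> f x \<le> s \<longrightarrow> (\<forall>y. u \<le> y \<and> y \<le> x \<longrightarrow> f y \<le> f y0)"
  proof (intro allI impI)
    fix x y assume "u \<le> x \<and> x \<le> w \<and> f x \<le> s" "u \<le> y \<and> y \<le> x"
    hence "x \<le> x'" using x'(3) by auto
    thus "f y \<le> f y0" using y0(2) \<open>u \<le> y \<and> y \<le> x\<close> by auto
  qed
  ultimately show ?thesis by blast
qed

lemma desc_gen:
  assumes "u \<in> II" "w \<in> II" "s < f u" "\<forall>y. u < y \<and> y \<le> w \<longrightarrow> f y < d"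
  shows "\<exists>t'<d. \<forall>x. u \<le> x \<and> x \<le> w \<and> f x \<le> s \<longrightarrow> (\<forall>y. x \<le> y \<and> y \<le> w \<longrightarrow> f y \<le> t')"
proof (cases "\<exists>x. u \<le> x \<and> x \<le> w \<and> f x \<le> s")
  case False thus ?thesis by (intro exI[of _ "d - 1"]) auto
next
  case True
  then obtain x1 where x1: "x1 \<in> {u..w}" "f x1 \<in> {..s}" by auto
  obtain x' where x': "x' \<in> {u..w}" "f x' \<in> {..s}" "\<forall>y\<in>{u..w}. f y \<in> {..s} \<longrightarrow> x' \<le> y"
    using first_in[OF contI[OF assms(1,2)] closed_atMost x1] by blast
  have "x' \<noteq> u" using x'(2) assms(3) by auto
  hence x'w: "u < x'" using x'(1) by auto
  have x'I: "x' \<in> II" using I_Icc[OF assms(1,2)] x'(1) by auto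
  obtain y0 where y0: "y0 \<in> {x'..w}" "\<forall>y\<in>{x'..w}. f y \<le> f y0"
    using continuous_attains_sup[OF compact_Icc _ contI[OF x'I assms(2)]] x'(1) by fastforce
  have "f y0 < d" using assms(4) y0(1) x'w by auto
  moreover have "\<forall>x. u \<le> x \<and> x \<le> w \<and> f x \<le> s \<longrightarrow> (\<forall>y. x \<le> y \<and> y \<le> w \<longrightarrow> f y \<le> f y0)"
  proof (intro allI impI)
    fix x y assume "u \<le> x \<and> x \<le> w \<and> f x \<le> s" "x \<le> y \<and> y \<le> w"
    hence "x' \<le> x" using x'(3) by auto
    thus "f y \<le> f y0" using y0(2) \<open>x \<le> y \<and> y \<le> w\<close> by auto
  qed
  ultimately show ?thesis by blast
qed

lemma seg:
  assumes "u \<le> w" "u \<in> II" "w \<in> II" "\<forall>y. u \<le> y \<and> y \<le> w \<longrightarrow> f y \<le> t"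
  shows "connected_component (sublevel f t0 t1 t) u w"
proof -
  have sub: "{u..w} \<subseteq> sublevel f t0 t1 t"
  proof
    fix y assume y: "y \<in> {u..w}"
    hence "y \<in> II" using I_Icc[OF assms(2,3)] by blast
    moreover have "f y \<le> t" using assms(4) y by simp
    ultimately show "y \<in> sublevel f t0 t1 t" unfolding sublevel_def by blast
  qed
  have "connected {u..w}" by simp
  moreover have "u \<in> {u..w}" "w \<in> {u..w}" using assms(1) by simp_all
  ultimately show ?thesis unfolding connected_component_def using sub by blast
qed

lemma sep:
  assumes "u < z" "z < w" "z \<in> II" "t < f z" "connected_component (sublevel f t0 t1 t) u w"
  shows False
proof -
  obtain T where T: "connected T" "T \<subseteq> sublevel f t0 t1 t" "u \<in> T" "w \<in> T"
    using assms(5) unfolding connected_component_def by blast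
  have "is_interval T" using T(1) is_interval_connected_1 by blast
  hence "\<forall>a\<in>T. \<forall>b\<in>T. \<forall>x. a \<le> x \<and> x \<le> b \<longrightarrow> x \<in> T" unfolding is_interval_1 .
  hence "z \<in> T" using T(3,4) assms(1,2) by (meson less_imp_le)
  hence "f z \<le> t" using T(2) unfolding sublevel_def by blast
  thus False using assms(4) by simp
qed

lemma BB_mono: "i \<le> k \<Longrightarrow> k \<le> nW \<Longrightarrow> BB i \<le> BB k"
proof (induction k)
  case 0 thus ?case by simp
next
  case (Suc k)
  show ?case
  proof (cases "i = Suc k")
    case True thus ?thesis by simp
  next
    case False
    hence "BB i \<le> BB k" using Suc by auto
    moreover have "BB k < DD k" "DD k < BB (Suc k)" using BD[of k] ord[of k] Suc.prems by auto
    ultimately show ?thesis by auto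
  qed
qed

end

context WS begin

lemma BBsub: "k \<le> nW \<Longrightarrow> t > b \<Longrightarrow> BB k \<in> sublevel f t0 t1 t"
  using BBI[of k] unfolding sublevel_def by auto

lemma count_lemma:
  assumes s: "b < s" and t: "s \<le> t" "t < d"
    and reach: "\<forall>x\<in>II. f x \<le> s \<longrightarrow> (\<exists>k\<le>nW. connected_component (sublevel f t0 t1 t) x (BB k))"
  shows "finite (Kset f t0 t1 s t) \<and> card (Kset f t0 t1 s t) = nW + 1"
proof -
  define cc where "cc = (\<lambda>k. connected_component_set (sublevel f t0 t1 t) (BB k))"
  have tb: "b < t" using s t by simp
  have eq: "Kset f t0 t1 s t = cc ` {..nW}"
  proof
    show "Kset f t0 t1 s t \<subseteq> cc ` {..nW}"
    proof
      fix C assume "C \<in> Kset f t0 t1 s t"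
      then obtain x where C: "C \<in> comps f t0 t1 t" "x \<in> C" "f x \<le> s" unfolding Kset_def by blast
      have "x \<in> sublevel f t0 t1 t" using comps_sub[OF C(1)] C(2) by blast
      hence xI: "x \<in> II" unfolding sublevel_def by blast
      obtain k where k: "k \<le> nW" "connected_component (sublevel f t0 t1 t) x (BB k)" using reach xI C(3) by blast
      have "C = connected_component_set (sublevel f t0 t1 t) x" by (rule comps_eq_of_mem[OF C(1,2)])
      also have "\<dots> = cc k" unfolding cc_def using k(2) connected_component_eq
        by (metis mem_Collect_eq)
      finally show "C \<in> cc ` {..nW}" using k(1) by blast
    qed
    show "cc ` {..nW} \<subseteq> Kset f t0 t1 s t"
    proof
      fix C assume "C \<in> cc ` {..nW}"
      then obtain k where k: "k \<le> nW" "C = cc k" by blast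
      have Bk: "BB k \<in> sublevel f t0 t1 t" by (rule BBsub[OF k(1) tb])
      have "C \<in> comps f t0 t1 t" unfolding k(2) cc_def by (rule comps_cc[OF Bk])
      moreover have "BB k \<in> C" unfolding k(2) cc_def using Bk by simp
      moreover have "f (BB k) \<le> s" using BBI[OF k(1)] s by simp
      ultimately show "C \<in> Kset f t0 t1 s t" unfolding Kset_def by blast
    qed
  qed
  have noconn: "\<not> connected_component (sublevel f t0 t1 t) (BB i) (BB j)" if ij: "i < j" "j \<le> nW" for i j
  proof
    assume conn: "connected_component (sublevel f t0 t1 t) (BB i) (BB j)"
    have "BB i < DD i" using BD[of i] ij by simp
    moreover have "DD i < BB (Suc i)" using ord[of i] ij by simp
    moreover have "BB (Suc i) \<le> BB j" using BB_mono[of "Suc i" j] ij by simp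
    moreover have "DD i \<in> II" "f (DD i) = d" using DDdata[of i] ij by auto
    ultimately show False using sep[of "BB i" "DD i" "BB j" t, OF _ _ _ _ conn] t by simp
  qed
  have inj: "inj_on cc {..nW}"
  proof (rule inj_onI)
    fix i j assume ij: "i \<in> {..nW}" "j \<in> {..nW}" "cc i = cc j"
    show "i = j"
    proof (rule linorder_cases[of i j])
      assume "i < j"
      have "BB j \<in> cc j" unfolding cc_def using BBsub[of j t] ij tb by simp
      hence "BB j \<in> cc i" using ij by simp
      hence "connected_component (sublevel f t0 t1 t) (BB i) (BB j)" unfolding cc_def by simp
      thus ?thesis using noconn[OF \<open>i < j\<close>] ij by simp
    next
      assume "j < i"
      have "BB i \<in> cc i" unfolding cc_def using BBsub[of i t] ij tb by simp
      hence "BB i \<in> cc j" using ij by simp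
      hence "connected_component (sublevel f t0 t1 t) (BB j) (BB i)" unfolding cc_def by simp
      thus ?thesis using noconn[OF \<open>j < i\<close>] ij by simp
    qed
  qed
  show ?thesis unfolding eq using card_image[OF inj] by simp
qed

end

context WS begin

lemma levels: "\<exists>ss tt. b < ss \<and> ss \<le> tt \<and> tt < d \<and>
   (\<forall>s t. b < s \<and> s \<le> ss \<and> tt \<le> t \<and> t < d \<longrightarrow>
      finite (Kset f t0 t1 s t) \<and> card (Kset f t0 t1 s t) = nW + 1)"
proof -
  obtain mT where mT: "b < mT" "\<forall>x\<in>II. DD nW \<le> x \<longrightarrow> mT \<le> f x" using tailmin by blast
  have "\<forall>j. \<exists>e m. j < nW \<longrightarrow> (DD j \<le> e \<and> e < BB (Suc j) \<and> b < m \<and> (\<forall>y. DD j \<le> y \<and> y \<le> e \<longrightarrow> m \<le> f y)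
    \<and> (\<forall>y. e < y \<and> y \<le> BB (Suc j) \<longrightarrow> f y < d))" using descmin by blast
  then obtain E M where EM: "\<And>j. j < nW \<Longrightarrow> DD j \<le> E j \<and> E j < BB (Suc j) \<and> b < M j \<and>
      (\<forall>y. DD j \<le> y \<and> y \<le> E j \<longrightarrow> M j \<le> f y) \<and> (\<forall>y. E j < y \<and> y \<le> BB (Suc j) \<longrightarrow> f y < d)"
    by metis
  define mm where "mm = Min (insert mT (insert d (M ` {..<nW})))"
  have fin: "finite (insert mT (insert d (M ` {..<nW})))" by simp
  have bmm: "b < mm" unfolding mm_def using Min_gr_iff[OF fin] mT(1) bd EM by auto
  have mm1: "mm \<le> mT" unfolding mm_def by (rule Min_le[OF fin]) simp
  have mm2: "mm \<le> d" unfolding mm_def by (rule Min_le[OF fin]) simp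
  have mm3: "\<And>j. j < nW \<Longrightarrow> mm \<le> M j" unfolding mm_def by (rule Min_le[OF fin]) simp
  note mm_le = mm1 mm2 mm3
  define ss where "ss = (b + mm) / 2"
  have ss: "b < ss" "ss < mm" using bmm unfolding ss_def by auto
  have "\<forall>k. \<exists>t'. k \<le> nW \<longrightarrow> (t' < d \<and> (\<forall>x. BB k \<le> x \<and> x \<le> DD k \<and> f x \<le> ss \<longrightarrow> (\<forall>y. BB k \<le> y \<and> y \<le> x \<longrightarrow> f y \<le> t')))"
  proof (intro allI)
    fix k
    show "\<exists>t'. k \<le> nW \<longrightarrow> (t' < d \<and> (\<forall>x. BB k \<le> x \<and> x \<le> DD k \<and> f x \<le> ss \<longrightarrow> (\<forall>y. BB k \<le> y \<and> y \<le> x \<longrightarrow> f y \<le> t')))"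
    proof (cases "k \<le> nW")
      case True
      have B: "BB k \<in> II" using BBI[OF True] by simp
      have D: "DD k \<in> II" "f (DD k) = d" using DDdata[OF True] by auto
      have "ss < f (DD k)" using D(2) ss mm_le by simp
      moreover have "\<forall>y. BB k \<le> y \<and> y < DD k \<longrightarrow> f y < d"
      proof (intro allI impI)
        fix y assume y: "BB k \<le> y \<and> y < DD k"
        hence "y \<in> II" using I_Icc[OF B D(1)] by auto
        thus "f y < d" using asc[OF True] y by simp
      qed
      ultimately show ?thesis using asc_gen[OF B D(1)] by blast
    qed simp
  qed
  then obtain TA where TA: "\<And>k. k \<le> nW \<Longrightarrow> TA k < d \<and> (\<forall>x. BB k \<le> x \<and> x \<le> DD k \<and> f x \<le> ss \<longrightarrow> (\<forall>y. BB k \<le> y \<and> y \<le> x \<longrightarrow> f y \<le> TA k))"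
    by metis
  have "\<forall>j. \<exists>t'. j < nW \<longrightarrow> (t' < d \<and> (\<forall>x. E j \<le> x \<and> x \<le> BB (Suc j) \<and> f x \<le> ss \<longrightarrow> (\<forall>y. x \<le> y \<and> y \<le> BB (Suc j) \<longrightarrow> f y \<le> t')))"
  proof (intro allI)
    fix j
    show "\<exists>t'. j < nW \<longrightarrow> (t' < d \<and> (\<forall>x. E j \<le> x \<and> x \<le> BB (Suc j) \<and> f x \<le> ss \<longrightarrow> (\<forall>y. x \<le> y \<and> y \<le> BB (Suc j) \<longrightarrow> f y \<le> t')))"
    proof (cases "j < nW")
      case True
      have B: "BB (Suc j) \<in> II" using BBI[of "Suc j"] True by simp
      have D: "DD j \<in> II" using DDdata[of j] True by auto
      have e: "DD j \<le> E j" "E j < BB (Suc j)" "M j \<le> f (E j)" "\<forall>y. E j < y \<and> y \<le> BB (Suc j) \<longrightarrow> f y < d"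
        using EM[OF True] by auto
      have eI: "E j \<in> II" using I_Icc[OF D B] e by auto
      have "ss < f (E j)" using e(3) ss mm_le(3)[OF True] by simp
      thus ?thesis using desc_gen[OF eI B _ e(4)] by blast
    qed simp
  qed
  then obtain TD where TD: "\<And>j. j < nW \<Longrightarrow> TD j < d \<and> (\<forall>x. E j \<le> x \<and> x \<le> BB (Suc j) \<and> f x \<le> ss \<longrightarrow> (\<forall>y. x \<le> y \<and> y \<le> BB (Suc j) \<longrightarrow> f y \<le> TD j))"
    by metis
  define tt where "tt = Max (insert ss (TA ` {..nW} \<union> TD ` {..<nW}))"
  have fin2: "finite (insert ss (TA ` {..nW} \<union> TD ` {..<nW}))" by simp
  have ttd: "tt < d" unfolding tt_def using Max_less_iff[OF fin2] ss mm_le TA TD by auto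
  have tt1: "ss \<le> tt" unfolding tt_def by (rule Max_ge[OF fin2]) simp
  have tt2: "\<And>k. k \<le> nW \<Longrightarrow> TA k \<le> tt" unfolding tt_def by (rule Max_ge[OF fin2]) simp
  have tt3: "\<And>j. j < nW \<Longrightarrow> TD j \<le> tt" unfolding tt_def by (rule Max_ge[OF fin2]) simp
  note tt_ge = tt1 tt2 tt3
  have main: "finite (Kset f t0 t1 s t) \<and> card (Kset f t0 t1 s t) = nW + 1"
    if st: "b < s" "s \<le> ss" "tt \<le> t" "t < d" for s t
  proof (rule count_lemma)
    show "b < s" "t < d" using st by auto
    show "s \<le> t" using st tt_ge by simp
    show "\<forall>x\<in>II. f x \<le> s \<longrightarrow> (\<exists>k\<le>nW. connected_component (sublevel f t0 t1 t) x (BB k))"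
    proof (intro ballI impI)
      fix x assume xI: "x \<in> II" and fx: "f x \<le> s"
      show "\<exists>k\<le>nW. connected_component (sublevel f t0 t1 t) x (BB k)"
      proof (cases "x \<le> p0")
        case True
        have "\<forall>y. x \<le> y \<and> y \<le> p0 \<longrightarrow> f y \<le> t"
        proof (intro allI impI)
          fix y assume y: "x \<le> y \<and> y \<le> p0"
          hence "y \<in> II" using I_Icc[OF xI p0I] by auto
          hence "f y < b" using p0f y by simp
          thus "f y \<le> t" using st ss tt_ge by simp
        qed
        from seg[OF True xI p0I this] have "connected_component (sublevel f t0 t1 t) x (BB 0)"
          by (simp add: BB_def)
        thus ?thesis by blast
      next
        case False
        define K where "K = {j. j \<le> nW \<and> BB j \<le> x}"
        have finK: "finite K" unfolding K_def by simp
        have "0 \<in> K" unfolding K_def using False by (simp add: BB_def)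
        define k where "k = Max K"
        have kK: "k \<in> K" unfolding k_def using Max_in[OF finK] \<open>0 \<in> K\<close> by blast
        have kmax: "\<And>j. j \<in> K \<Longrightarrow> j \<le> k" unfolding k_def using Max_ge[OF finK] by blast
        have k: "k \<le> nW" "BB k \<le> x" using kK unfolding K_def by auto
        have Bk: "BB k \<in> II" using BBI[OF k(1)] by simp
        show ?thesis
        proof (cases "x < DD k")
          case True
          have "\<forall>y. BB k \<le> y \<and> y \<le> x \<longrightarrow> f y \<le> t"
            using TA[OF k(1)] k(2) True fx st tt_ge(2)[OF k(1)] by (meson less_imp_le order_trans)
          from seg[OF k(2) Bk xI this] have "connected_component (sublevel f t0 t1 t) x (BB k)"
            by (rule connected_component_sym)
          thus ?thesis using k(1) by blast
        next
          case False
          hence Dx: "DD k \<le> x" by simp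
          show ?thesis
          proof (cases "k = nW")
            case True
            hence "mT \<le> f x" using mT(2) xI Dx by simp
            thus ?thesis using fx st ss mm_le by simp
          next
            case False
            hence kn: "k < nW" using k(1) by simp
            have "\<not> BB (Suc k) \<le> x"
            proof
              assume "BB (Suc k) \<le> x"
              hence "Suc k \<in> K" unfolding K_def using kn by simp
              thus False using kmax by fastforce
            qed
            hence xB: "x < BB (Suc k)" by simp
            have ek: "DD k \<le> E k" "E k < BB (Suc k)" "b < M k" "\<forall>y. DD k \<le> y \<and> y \<le> E k \<longrightarrow> M k \<le> f y"
              using EM[OF kn] by auto
            have "E k < x"
            proof (rule ccontr)
              assume "\<not> E k < x"
              hence "M k \<le> f x" using ek(4) Dx by simp
              thus False using fx st ss mm_le(3)[OF kn] by simp
            qed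
            have BI: "BB (Suc k) \<in> II" using BBI[of "Suc k"] kn by simp
            have "\<forall>y. x \<le> y \<and> y \<le> BB (Suc k) \<longrightarrow> f y \<le> t"
              using TD[OF kn] \<open>E k < x\<close> xB fx st tt_ge(3)[OF kn] by (meson less_imp_le order_trans)
            from seg[OF less_imp_le[OF xB] xI BI this]
            show ?thesis using kn by (intro exI[of _ "Suc k"]) simp
          qed
        qed
      qed
    qed
  qed
  show ?thesis using ss tt_ge(1) ttd main by blast
qed

end

theorem mainTheorem1:
  fixes f :: "real \<Rightarrow> real" and t0 t1 :: ereal and b d :: real
    and J :: "'i \<Rightarrow> real set" and v :: "'i \<Rightarrow> real \<Rightarrow> real set \<Rightarrow> 'k::field"
  assumes "t0 < t1"
    and "continuous_on (Ioo_ereal t0 t1) f"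
    and "b < d"
    and "Limsup (left_end_filter t0) (\<lambda>t. ereal (f t)) < ereal b"
    and "ereal d < Liminf (right_end_filter t1) (\<lambda>t. ereal (f t))"
    and "PH0_barcode f t0 t1 J v"
  shows "finite {a. straddles (J a) b d} \<and> finite (windings f t0 t1 b d) \<and>
         card {a. straddles (J a) b d} = card (windings f t0 t1 b d) + 1"
proof -
  note B = assms(6)
  obtain p0 where p0: "p0 \<in> Ioo_ereal t0 t1" "\<forall>x\<in>Ioo_ereal t0 t1. x \<le> p0 \<longrightarrow> f x < b"
    using E0[OF assms(1) assms(4)] by blast
  obtain c1 where c1: "c1 \<in> Ioo_ereal t0 t1" "\<forall>x\<in>Ioo_ereal t0 t1. c1 \<le> x \<longrightarrow> d < f x"
    using E1[OF assms(1) assms(5)] by blast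
  interpret W: WS f t0 t1 b d p0 c1
    by (rule WS.intro) (use assms p0 c1 in auto)
  obtain ss tt where sst: "b < ss" "ss \<le> tt" "tt < d"
    and K: "\<And>s t. b < s \<Longrightarrow> s \<le> ss \<Longrightarrow> tt \<le> t \<Longrightarrow> t < d \<Longrightarrow>
      finite (Kset f t0 t1 s t) \<and> card (Kset f t0 t1 s t) = W.nW + 1"
    using W.levels by blast
  have cardA: "finite (Aset J s t) \<and> card (Aset J s t) = W.nW + 1"
    if st: "b < s" "s \<le> ss" "tt \<le> t" "t < d" for s t
  proof -
    have "s \<le> t" using st sst by simp
    from LA_main[OF B this] K[OF st] show ?thesis by simp
  qed
  have intv: "\<And>a. is_interval (J a)" using B unfolding PH0_barcode_def by blast
  have inJ: "x \<in> J a" if "y \<in> J a" "z \<in> J a" "y \<le> x" "x \<le> z" for a x y z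
    using intv[of a] that unfolding is_interval_1 by blast
  have A0: "finite (Aset J ss tt)" "card (Aset J ss tt) = W.nW + 1" using cardA[of ss tt] sst by auto
  have eqs: "Aset J s tt = Aset J ss tt" if s: "b < s" "s \<le> ss" for s
  proof (rule card_subset_eq[OF A0(1)])
    show "Aset J s tt \<subseteq> Aset J ss tt" unfolding Aset_def using inJ s sst by blast
    show "card (Aset J s tt) = card (Aset J ss tt)" using cardA[of s tt] s sst A0 by simp
  qed
  have eqt: "Aset J ss t = Aset J ss tt" if t: "tt \<le> t" "t < d" for t
  proof (rule card_subset_eq[OF A0(1)])
    show "Aset J ss t \<subseteq> Aset J ss tt" unfolding Aset_def using inJ t sst by blast
    show "card (Aset J ss t) = card (Aset J ss tt)" using cardA[of ss t] t sst A0 by simp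
  qed
  have S: "{a. straddles (J a) b d} = Aset J ss tt"
  proof
    show "{a. straddles (J a) b d} \<subseteq> Aset J ss tt"
    proof
      fix a assume "a \<in> {a. straddles (J a) b d}"
      hence st: "bar_birth (J a) \<le> ereal b" "ereal d \<le> bar_death (J a)" unfolding straddles_def by auto
      have "Inf (ereal ` J a) < ereal ss" using st(1) sst unfolding bar_birth_def by (simp add: le_less_trans)
      then obtain y where y: "y \<in> J a" "y < ss" unfolding Inf_less_iff by auto
      have "ereal tt < ereal d" using sst by simp
      hence "ereal tt < Sup (ereal ` J a)" using st(2) unfolding bar_death_def by (rule less_le_trans)
      then obtain z where z: "z \<in> J a" "tt < z" unfolding less_Sup_iff by auto
      have "ss \<in> J a" "tt \<in> J a" using inJ[OF y(1) z(1)] y z sst by auto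
      thus "a \<in> Aset J ss tt" unfolding Aset_def by simp
    qed
    show "Aset J ss tt \<subseteq> {a. straddles (J a) b d}"
    proof
      fix a assume a: "a \<in> Aset J ss tt"
      have birth: "bar_birth (J a) \<le> ereal b"
      proof (rule ccontr)
        assume "\<not> bar_birth (J a) \<le> ereal b"
        hence "ereal b < min (Inf (ereal ` J a)) (ereal ss)" using sst unfolding bar_birth_def by auto
        then obtain z where z: "ereal b < ereal z" "ereal z < min (Inf (ereal ` J a)) (ereal ss)"
          using ereal_dense2 by blast
        hence zz: "b < z" "z < ss" "ereal z < Inf (ereal ` J a)" by auto
        have "a \<in> Aset J z tt" using eqs[of z] zz a by simp
        hence "z \<in> J a" unfolding Aset_def by simp
        hence "Inf (ereal ` J a) \<le> ereal z" by (simp add: Inf_lower)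
        thus False using zz(3) by simp
      qed
      have death: "ereal d \<le> bar_death (J a)"
      proof (rule ccontr)
        assume "\<not> ereal d \<le> bar_death (J a)"
        hence "max (Sup (ereal ` J a)) (ereal tt) < ereal d" using sst unfolding bar_death_def by auto
        then obtain z where z: "max (Sup (ereal ` J a)) (ereal tt) < ereal z" "ereal z < ereal d"
          using ereal_dense2 by blast
        hence zz: "tt < z" "z < d" "Sup (ereal ` J a) < ereal z" by auto
        have "a \<in> Aset J ss z" using eqt[of z] zz a by simp
        hence "z \<in> J a" unfolding Aset_def by simp
        hence "ereal z \<le> Sup (ereal ` J a)" by (simp add: Sup_upper)
        thus False using zz(3) by simp
      qed
      show "a \<in> {a. straddles (J a) b d}" unfolding straddles_def using birth death assms(3) by simp
    qed
  qed
  show ?thesis unfolding S using A0 W.wind_finite W.nW_def by simp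
qed

end
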